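(* Let $G$ be a connected vertex-transitive graph with at least one edge. Then $\mathrm{ldim}_f(G)=\frac{|V(G)|}{l(G)}$, where $l(G)=\min\{|L(uv)|: uv\in E(G)\}$.
   Context: All graphs are finite and simple; $d$ is the shortest-path distance. $G$ is vertex-transitive if its automorphism group acts transitively on $V(G)$. For an edge $uv$, $L(uv)=\{x\in V(G): d(u,x)\neq d(v,x)\}$. A function $f:V(G)\to[0,1]$ is a local resolving function if $\sum_{x\in L(uv)}f(x)\geq 1$ for every edge $uv$; $\mathrm{ldim}_f(G)$ is the minimum of $\sum_v f(v)$ over all local resolving functions. *)

theory Defs
  imports Complex_Main
begin

definition simple_graph :: "'a set \<Rightarrow> ('a \<Rightarrow> 'a \<Rightarrow> bool) \<Rightarrow> bool" where
  "simple_graph V E \<longleftrightarrow> finite V \<and> (\<forall>x y. E x y \<longrightarrow> x \<in> V \<and> y \<in> V)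
     \<and> (\<forall>x y. E x y \<longrightarrow> E y x) \<and> (\<forall>x. \<not> E x x)"

definition connected_graph :: "'a set \<Rightarrow> ('a \<Rightarrow> 'a \<Rightarrow> bool) \<Rightarrow> bool" where
  "connected_graph V E \<longleftrightarrow> (\<forall>u\<in>V. \<forall>v\<in>V. \<exists>n. (E ^^ n) u v)"

definition gdist :: "('a \<Rightarrow> 'a \<Rightarrow> bool) \<Rightarrow> 'a \<Rightarrow> 'a \<Rightarrow> nat" where
  "gdist E u v = (LEAST n. (E ^^ n) u v)"

definition graph_aut :: "'a set \<Rightarrow> ('a \<Rightarrow> 'a \<Rightarrow> bool) \<Rightarrow> ('a \<Rightarrow> 'a) \<Rightarrow> bool" where
  "graph_aut V E \<sigma> \<longleftrightarrow> bij_betw \<sigma> V V \<and> (\<forall>x\<in>V. \<forall>y\<in>V. E x y \<longleftrightarrow> E (\<sigma> x) (\<sigma> y))"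

definition vertex_transitive :: "'a set \<Rightarrow> ('a \<Rightarrow> 'a \<Rightarrow> bool) \<Rightarrow> bool" where
  "vertex_transitive V E \<longleftrightarrow> (\<forall>u\<in>V. \<forall>v\<in>V. \<exists>\<sigma>. graph_aut V E \<sigma> \<and> \<sigma> u = v)"

definition Lset :: "'a set \<Rightarrow> ('a \<Rightarrow> 'a \<Rightarrow> bool) \<Rightarrow> 'a \<Rightarrow> 'a \<Rightarrow> 'a set" where
  "Lset V E u v = {x\<in>V. gdist E u x \<noteq> gdist E v x}"

definition local_resolving_fun :: "'a set \<Rightarrow> ('a \<Rightarrow> 'a \<Rightarrow> bool) \<Rightarrow> ('a \<Rightarrow> real) \<Rightarrow> bool" where
  "local_resolving_fun V E f \<longleftrightarrow> (\<forall>x\<in>V. 0 \<le> f x \<and> f x \<le> 1)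
     \<and> (\<forall>u v. E u v \<longrightarrow> (\<Sum>x\<in>Lset V E u v. f x) \<ge> 1)"

text \<open>Minimum total weight of a local resolving function (taken as infimum; the minimum is attained).\<close>
definition ldim_f :: "'a set \<Rightarrow> ('a \<Rightarrow> 'a \<Rightarrow> bool) \<Rightarrow> real" where
  "ldim_f V E = Inf {(\<Sum>v\<in>V. f v) | f. local_resolving_fun V E f}"

definition lG :: "'a set \<Rightarrow> ('a \<Rightarrow> 'a \<Rightarrow> bool) \<Rightarrow> nat" where
  "lG V E = Min {card (Lset V E u v) | u v. E u v}"

end

theory Submission
  imports Defs
begin

lemma relpow_aut:
  assumes sg: "simple_graph V E" and au: "graph_aut V E \<sigma>" and x: "x \<in> V"
  shows "y \<in> V \<Longrightarrow> (E^^n) (\<sigma> x) (\<sigma> y) \<longleftrightarrow> (E^^n) x y"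
proof (induction n arbitrary: y)
  case 0
  have "inj_on \<sigma> V" using au unfolding graph_aut_def bij_betw_def by blast
  then show ?case using 0 x by (auto dest: inj_onD)
next
  case (Suc n)
  have EV: "\<And>a b. E a b \<Longrightarrow> a \<in> V \<and> b \<in> V" using sg unfolding simple_graph_def by blast
  have ae: "\<And>a b. a \<in> V \<Longrightarrow> b \<in> V \<Longrightarrow> E a b \<longleftrightarrow> E (\<sigma> a) (\<sigma> b)"
    using au unfolding graph_aut_def by blast
  have im: "\<sigma> ` V = V" using au unfolding graph_aut_def bij_betw_def by blast
  show ?case
  proof
    assume "(E^^Suc n) (\<sigma> x) (\<sigma> y)"
    then obtain w where w: "(E^^n) (\<sigma> x) w" "E w (\<sigma> y)" by auto
    have "w \<in> V" using EV w(2) by blast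
    then obtain z where z: "z \<in> V" "w = \<sigma> z" using im by blast
    have "(E^^n) x z" using Suc.IH[OF z(1)] w z by simp
    moreover have "E z y" using ae[OF z(1) Suc.prems] w z by simp
    ultimately show "(E^^Suc n) x y" by auto
  next
    assume "(E^^Suc n) x y"
    then obtain z where z: "(E^^n) x z" "E z y" by auto
    have zV: "z \<in> V" using EV z(2) by blast
    have "(E^^n) (\<sigma> x) (\<sigma> z)" using Suc.IH[OF zV] z by simp
    moreover have "E (\<sigma> z) (\<sigma> y)" using ae[OF zV Suc.prems] z by simp
    ultimately show "(E^^Suc n) (\<sigma> x) (\<sigma> y)" by auto
  qed
qed

lemma gdist_aut:
  assumes sg: "simple_graph V E" and au: "graph_aut V E \<sigma>" and x: "x \<in> V" and y: "y \<in> V"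
  shows "gdist E (\<sigma> x) (\<sigma> y) = gdist E x y"
  unfolding gdist_def using relpow_aut[OF sg au x y] by simp

lemma Lset_aut:
  assumes sg: "simple_graph V E" and au: "graph_aut V E \<sigma>" and u: "u \<in> V" and v: "v \<in> V"
  shows "Lset V E (\<sigma> u) (\<sigma> v) = \<sigma> ` Lset V E u v"
proof -
  have im: "\<sigma> ` V = V" using au unfolding graph_aut_def bij_betw_def by blast
  show ?thesis
  proof
    show "Lset V E (\<sigma> u) (\<sigma> v) \<subseteq> \<sigma> ` Lset V E u v"
    proof
      fix w assume w: "w \<in> Lset V E (\<sigma> u) (\<sigma> v)"
      then have "w \<in> V" unfolding Lset_def by blast
      then obtain z where z: "z \<in> V" "w = \<sigma> z" using im by blast
      then show "w \<in> \<sigma> ` Lset V E u v" using w gdist_aut[OF sg au u z(1)] gdist_aut[OF sg au v z(1)]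
        unfolding Lset_def by auto
    qed
  next
    show "\<sigma> ` Lset V E u v \<subseteq> Lset V E (\<sigma> u) (\<sigma> v)"
      using gdist_aut[OF sg au u] gdist_aut[OF sg au v] im unfolding Lset_def by auto
  qed
qed

lemma gdist_self: "gdist E u u = 0"
  unfolding gdist_def by (rule Least_eq_0) simp

lemma u_in_Lset:
  assumes sg: "simple_graph V E" and c: "connected_graph V E" and e: "E u v"
  shows "u \<in> Lset V E u v"
proof -
  have uv: "u \<in> V" "v \<in> V" "u \<noteq> v" using sg e unfolding simple_graph_def by metis+
  obtain n where "(E^^n) v u" using c uv unfolding connected_graph_def by blast
  then have "(E^^(gdist E v u)) v u" unfolding gdist_def by (rule LeastI)
  then have "gdist E v u \<noteq> 0" using uv by (metis relpowp.simps(1))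
  then show ?thesis using uv gdist_self[of E u] unfolding Lset_def by auto
qed

theorem theorem2p15:
  fixes V :: "'a set" and E :: "'a \<Rightarrow> 'a \<Rightarrow> bool"
  assumes "simple_graph V E"
    and "connected_graph V E"
    and "vertex_transitive V E"
    and "\<exists>u v. E u v"
  shows "ldim_f V E = real (card V) / real (lG V E)"
proof -
  note sg = assms(1)
  have fin: "finite V" using sg unfolding simple_graph_def by blast
  have EV: "\<And>a b. E a b \<Longrightarrow> a \<in> V \<and> b \<in> V" using sg unfolding simple_graph_def by blast
  define l where "l = lG V E"
  define Ls where "Ls = {card (Lset V E u v) | u v. E u v}"
  have "Ls = (\<lambda>p. card (Lset V E (fst p) (snd p))) ` {p \<in> V \<times> V. E (fst p) (snd p)}"
    unfolding Ls_def using EV by force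
  then have finLs: "finite Ls" using fin by simp
  have neLs: "Ls \<noteq> {}" using assms(4) unfolding Ls_def by blast
  have lmin: "\<And>u v. E u v \<Longrightarrow> l \<le> card (Lset V E u v)"
    unfolding l_def lG_def Ls_def[symmetric] using finLs by (auto simp: Ls_def intro!: Min_le)
  have "l \<in> Ls" unfolding l_def lG_def Ls_def[symmetric] using finLs neLs by (rule Min_in)
  then obtain u0 v0 where e0: "E u0 v0" "card (Lset V E u0 v0) = l" unfolding Ls_def by blast
  have finL: "\<And>u v. finite (Lset V E u v)" using fin unfolding Lset_def by simp
  have lpos: "l \<ge> 1" using e0 u_in_Lset[OF sg assms(2) e0(1)] finL
    by (metis One_nat_def Suc_leI card_gt_0_iff empty_iff)
  define P where "P = {p \<in> V \<times> V. E (fst p) (snd p) \<and> card (Lset V E (fst p) (snd p)) = l}"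
  have finP: "finite P" unfolding P_def using fin by (auto intro: finite_subset[of _ "V \<times> V"])
  have P0: "(u0, v0) \<in> P" unfolding P_def using e0 EV by auto
  define cnt where "cnt x = card {p \<in> P. x \<in> Lset V E (fst p) (snd p)}" for x
  have cle: "cnt x \<le> cnt y" if x: "x \<in> V" and y: "y \<in> V" for x y
  proof -
    obtain \<sigma> where au: "graph_aut V E \<sigma>" and sx: "\<sigma> x = y"
      using assms(3) x y unfolding vertex_transitive_def by blast
    have inj: "inj_on \<sigma> V" using au unfolding graph_aut_def bij_betw_def by blast
    have ae: "\<And>a b. a \<in> V \<Longrightarrow> b \<in> V \<Longrightarrow> E a b \<longleftrightarrow> E (\<sigma> a) (\<sigma> b)"
      using au unfolding graph_aut_def by blast
    have im: "\<sigma> ` V = V" using au unfolding graph_aut_def bij_betw_def by blast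
    let ?A = "{p \<in> P. x \<in> Lset V E (fst p) (snd p)}"
    let ?B = "{p \<in> P. y \<in> Lset V E (fst p) (snd p)}"
    let ?h = "\<lambda>p. (\<sigma> (fst p), \<sigma> (snd p))"
    have "inj_on ?h ?A"
      by (rule inj_onI) (auto simp: P_def dest: inj_onD[OF inj])
    moreover have "?h ` ?A \<subseteq> ?B"
    proof
      fix q assume "q \<in> ?h ` ?A"
      then obtain a b where ab: "(a, b) \<in> P" "x \<in> Lset V E a b" "q = (\<sigma> a, \<sigma> b)" by auto
      have abV: "a \<in> V" "b \<in> V" "E a b" "card (Lset V E a b) = l" using ab unfolding P_def by auto
      have LL: "Lset V E (\<sigma> a) (\<sigma> b) = \<sigma> ` Lset V E a b" by (rule Lset_aut[OF sg au abV(1,2)])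
      have "card (Lset V E (\<sigma> a) (\<sigma> b)) = l" unfolding LL using abV(4)
        using card_image[OF inj_on_subset[OF inj, of "Lset V E a b"]] unfolding Lset_def by auto
      moreover have "\<sigma> a \<in> V" "\<sigma> b \<in> V" using abV im by auto
      moreover have "E (\<sigma> a) (\<sigma> b)" using ae abV by blast
      moreover have "y \<in> Lset V E (\<sigma> a) (\<sigma> b)" unfolding LL sx[symmetric] using ab by blast
      ultimately show "q \<in> ?B" using ab unfolding P_def by auto
    qed
    moreover have "finite ?B" using finP by simp
    ultimately show ?thesis unfolding cnt_def by (rule card_inj_on_le)
  qed
  have ceq: "cnt x = cnt u0" if "x \<in> V" for x
    using cle[OF that] cle[of u0 x] EV[OF e0(1)] that by force
  define c where "c = cnt u0"
  have dc: "(\<Sum>p\<in>P. \<Sum>x\<in>Lset V E (fst p) (snd p). g x) = (\<Sum>x\<in>V. g x * real c)" for g :: "'a \<Rightarrow> real"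
  proof -
    have "(\<Sum>p\<in>P. \<Sum>x\<in>Lset V E (fst p) (snd p). g x)
        = (\<Sum>p\<in>P. \<Sum>x\<in>V. if x \<in> Lset V E (fst p) (snd p) then g x else 0)"
      by (rule sum.cong[OF refl]) (auto simp: sum.If_cases fin Lset_def intro!: sum.cong)
    also have "\<dots> = (\<Sum>x\<in>V. \<Sum>p\<in>P. if x \<in> Lset V E (fst p) (snd p) then g x else 0)"
      by (rule sum.swap)
    also have "\<dots> = (\<Sum>x\<in>V. g x * real (cnt x))"
      by (rule sum.cong[OF refl]) (simp add: sum.If_cases finP cnt_def mult.commute Int_def)
    also have "\<dots> = (\<Sum>x\<in>V. g x * real c)" using ceq c_def by simp
    finally show ?thesis .
  qed
  have "(\<Sum>p\<in>P. \<Sum>x\<in>Lset V E (fst p) (snd p). (1::real)) = real (card P) * real l"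
  proof -
    have "(\<Sum>p\<in>P. \<Sum>x\<in>Lset V E (fst p) (snd p). (1::real)) = (\<Sum>p\<in>P. real l)"
      by (rule sum.cong[OF refl]) (simp add: P_def)
    then show ?thesis by simp
  qed
  then have cardP: "real (card P) * real l = real (card V) * real c" using dc[of "\<lambda>_. 1"] by simp
  have "card P > 0" using finP P0 by (auto simp: card_gt_0_iff)
  then have cpos: "real c > 0" using cardP lpos
    by (metis mult_eq_0_iff not_gr_zero of_nat_0_less_iff of_nat_eq_0_iff not_one_le_zero)
  let ?S = "{(\<Sum>v\<in>V. f v) | f. local_resolving_fun V E f}"
  have lower: "real (card V) / real l \<le> s" if "s \<in> ?S" for s
  proof -
    obtain f where f: "local_resolving_fun V E f" "s = (\<Sum>v\<in>V. f v)" using \<open>s \<in> ?S\<close> by blast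
    have "real (card P) \<le> (\<Sum>p\<in>P. \<Sum>x\<in>Lset V E (fst p) (snd p). f x)"
    proof -
      have "(\<Sum>p\<in>P. (1::real)) \<le> (\<Sum>p\<in>P. \<Sum>x\<in>Lset V E (fst p) (snd p). f x)"
        by (rule sum_mono) (use f(1) in \<open>auto simp: local_resolving_fun_def P_def\<close>)
      then show ?thesis by simp
    qed
    also have "\<dots> = s * real c" unfolding dc f(2) by (simp add: sum_distrib_right)
    finally have "real (card V) * real c \<le> s * real c * real l" using cardP lpos
      by (metis mult_right_mono of_nat_0_le_iff)
    then have "real (card V) \<le> s * real l" using cpos
      by (metis (no_types, lifting) mult.assoc mult.commute mult_le_cancel_left_pos)
    then show ?thesis using lpos by (simp add: divide_le_eq)
  qed
  have mem: "real (card V) / real l \<in> ?S"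
  proof -
    define f where "f = (\<lambda>_::'a. 1 / real l)"
    have "local_resolving_fun V E f"
      unfolding local_resolving_fun_def f_def
    proof (intro conjI allI impI ballI)
      fix u v assume "E u v"
      then have "real l \<le> real (card (Lset V E u v))" using lmin by simp
      then show "1 \<le> (\<Sum>x\<in>Lset V E u v. 1 / real l)" using lpos by (simp add: le_divide_eq)
    qed (use lpos in auto)
    moreover have "(\<Sum>v\<in>V. f v) = real (card V) / real l" unfolding f_def by simp
    ultimately show ?thesis by force
  qed
  show ?thesis unfolding ldim_f_def l_def[symmetric]
    by (rule cInf_eq_minimum[OF mem lower])
qed

end
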